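(* Let $p$ be a prime number and let $x,y,z\in\mathbb{N}$ with $x\le y\le z$ satisfy $\frac{4}{p}=\frac{1}{x}+\frac{1}{y}+\frac{1}{z}$. If $\gcd(y,p)=p$, then $\gcd(z,p)=p$.
   Context: $\mathbb{N}$ denotes the positive integers. *)

theory Defs
  imports Complex_Main "HOL-Computational_Algebra.Primes"
begin

end

theory Submission
  imports Defs
begin

theorem lemma4:
  fixes p x y z :: nat
  assumes "prime p"
    and "x > 0" and "y > 0" and "z > 0"
    and "x \<le> y" and "y \<le> z"
    and "(4::real) / of_nat p = 1 / of_nat x + 1 / of_nat y + 1 / of_nat z"
    and "gcd y p = p"
  shows "gcd z p = p"
proof (rule ccontr)
  assume nz: "gcd z p \<noteq> p"
  have p0: "p > 0" using assms(1) prime_gt_0_nat by blast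
  have "real (4*x*y*z) = real (p*(y*z+x*z+x*y))"
    using assms(2,3,4,7) p0 by (simp add: field_simps)
  hence E: "4*x*y*z = p*(y*z+x*z+x*y)" by linarith
  have "p dvd y" using assms(8) by (metis gcd_dvd1)
  then obtain b where yb: "y = p*b" by blast
  have b0: "b > 0" using yb assms(3) by simp
  have "p*(4*x*b*z) = p*(p*b*z + x*z + x*p*b)" using E yb by (simp add: algebra_simps)
  hence E2: "4*x*b*z = p*b*z + x*z + x*p*b" using p0 by simp
  have "x*z \<le> y*z" "x*y \<le> z*y" using assms(5,6) by simp_all
  hence "p*(x*z) \<le> p*(y*z)" "p*(x*y) \<le> p*(z*y)" by (simp_all add: mult_left_mono)
  moreover have "4*x*(y*z) = p*(y*z) + p*(x*z) + p*(x*y)" using E by (simp add: algebra_simps)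
  moreover have "3*p*(y*z) = p*(y*z) + p*(y*z) + p*(z*y)" by (simp add: algebra_simps)
  ultimately have "4*x*(y*z) \<le> 3*p*(y*z)" by linarith
  hence "4*x \<le> 3*p" using assms(3,4) by simp
  hence xp: "x < p" using p0 by linarith
  have nx: "\<not> int p dvd int x" using xp assms(2) by (simp add: nat_dvd_not_less)
  have nzz: "\<not> int p dvd int z" using nz by (metis gcd_nat.absorb_iff2 int_dvd_int_iff gcd.commute)
  have E3: "int x * int z * (4*int b - 1) = int p * (int b * (int z + int x))"
    using arg_cong[OF E2, of int] by (simp add: algebra_simps)
  have pr: "prime (int p)" using assms(1) by simp
  have "int p dvd int x * int z * (4*int b - 1)" using E3 by simp
  hence "int p dvd (4*int b - 1)" using pr nx nzz by (metis prime_dvd_mult_iff)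
  then obtain c where c: "4*int b - 1 = int p * c" by blast
  have "int p * (c * int x * int z) = int p * (int b * (int z + int x))"
  proof -
    have "int x * int z * (int p * c) = int p * (int b * (int z + int x))" using E3 unfolding c .
    thus ?thesis by (simp add: algebra_simps)
  qed
  hence E4: "c * int x * int z = int b * (int z + int x)" using p0 by simp
  have cxb: "c * int x - int b \<ge> 1"
  proof -
    have "c * int x * int z > int b * int z" using E4 assms(2) b0 by simp
    hence "c * int x > int b" using assms(4) by (simp add: mult_less_cancel_right)
    thus ?thesis by simp
  qed
  have cge: "c \<ge> 0"
  proof -
    have "int p * c > 0" using c b0 by linarith
    thus "c \<ge> 0" using p0 by (simp add: zero_less_mult_iff)
  qed
  have "c * int z \<ge> c * (int p * int b)"
    using cge assms(6) yb by (intro mult_left_mono) (simp_all flip: of_nat_mult)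
  moreover have "c * (int p * int b) = (int p * c) * int b" by (simp only: mult_ac)
  moreover have "(4*int b - 2) * int b = (4*int b - 1) * int b - int b" by algebra
  ultimately have czb: "c * int z - int b \<ge> (4*int b - 2) * int b" using c by simp
  have prod: "(c * int x - int b) * (c * int z - int b) = int b * int b"
    using E4 by (simp add: algebra_simps)
  have "(c * int x - int b) * (c * int z - int b) \<ge> 1 * ((4*int b - 2) * int b)"
    using cxb czb b0 by (intro mult_mono) auto
  moreover have "(3*int b - 2) * int b > 0" using b0 by (intro mult_pos_pos) auto
  moreover have "(4*int b - 2) * int b = int b * int b + (3*int b - 2) * int b" by algebra
  ultimately show False using prod by linarith
qed

end
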